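(* Let $\Omega\subset\mathbb{R}^2$ be polygonal with a triangulation $\mathcal{T}_h$, let $j,\ell\ge0$, and for each $T$ let $V(T)$ be a subspace of $[P_r(T)]^2$ defining the discrete weak gradient $\nabla_d$. There exist constants $K$ and $\alpha_1>0$ such that $$a(v,v)+K(v_0,v_0)\ge\alpha_1\big(\|\nabla_dv\|^2+\|v_0\|^2\big)$$ for all $v=\{v_0,v_b\}\in S_h(j,\ell)$.
   Context: Coefficients: $a$ is a symmetric $2\times2$ matrix-valued function with $L^\infty(\Omega)$ entries satisfying $\xi^Ta\xi\ge\alpha\xi^T\xi$ for all $\xi\in\mathbb{R}^2$ with $\alpha>0$; $b\in[L^\infty(\Omega)]^2$; $c\in L^\infty(\Omega)$. $P_j(T)$: polynomials of degree $\le j$ on $T$; $P_\ell(\partial T)$: functions on $\partial T$ that are polynomials of degree $\le\ell$ on each edge. $S_h(j,\ell)$: pairs $v=\{v_0,v_b\}$ with $v_0|_T\in P_j(T)$ for each $T\in\mathcal{T}_h$ and $v_b$ a function on the union of edges with $v_b|_{\partial T}\in P_\ell(\partial T)$. Discrete weak gradient: $\nabla_dv|_T\in V(T)$ is determined by $\int_T\nabla_dv\cdot q=-\int_Tv_0\nabla\cdot q+\int_{\partial T}v_b\,q\cdot\mathbf{n}\,ds$ for all $q\in V(T)$. $\|\cdot\|$ and $(\cdot,\cdot)$ denote the $L^2(\Omega)$ norm and inner product (elementwise for $\nabla_d v$). Bilinear form: $a(w,v)=(a\nabla_dw,\nabla_dv)-(bw_0,\nabla_dv)+(cw_0,v_0)$.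 *)

theory Defs
  imports "HOL-Analysis.Analysis"
begin

definition triangle :: "(real^2) set \<Rightarrow> bool" where
  "triangle T \<longleftrightarrow> (\<exists>A B C. \<not> collinear {A, B, C} \<and> T = convex hull {A, B, C})"

definition tri_vertices :: "(real^2) set \<Rightarrow> (real^2) set" where
  "tri_vertices T = {x. x extreme_point_of T}"

definition tri_edges :: "(real^2) set \<Rightarrow> (real^2) set set" where
  "tri_edges T = {closed_segment A B | A B. A \<in> tri_vertices T \<and> B \<in> tri_vertices T \<and> A \<noteq> B}"

definition triangulation :: "(real^2) set \<Rightarrow> (real^2) set set \<Rightarrow> bool" where
  "triangulation \<Omega> Th \<longleftrightarrow> finite Th \<and> Th \<noteq> {} \<and> (\<forall>T\<in>Th. triangle T) \<and> \<Union>Th = closure \<Omega> \<and>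
     (\<forall>T\<in>Th. \<forall>T'\<in>Th. T \<noteq> T' \<longrightarrow>
        T \<inter> T' = {}
      \<or> (\<exists>p. T \<inter> T' = {p} \<and> p \<in> tri_vertices T \<and> p \<in> tri_vertices T')
      \<or> (T \<inter> T' \<in> tri_edges T \<and> T \<inter> T' \<in> tri_edges T'))"

definition polygonal_domain :: "(real^2) set \<Rightarrow> bool" where
  "polygonal_domain \<Omega> \<longleftrightarrow> open \<Omega> \<and> connected \<Omega> \<and> \<Omega> \<noteq> {} \<and> bounded \<Omega>"

definition poly2 :: "nat \<Rightarrow> (real^2 \<Rightarrow> real) set" where
  "poly2 j = {p. \<exists>c :: nat \<Rightarrow> nat \<Rightarrow> real. \<forall>x.
      p x = (\<Sum>a\<le>j. \<Sum>b\<le>j - a. c a b * (x$1)^a * (x$2)^b)}"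

definition vpoly2 :: "nat \<Rightarrow> (real^2 \<Rightarrow> real^2) set" where
  "vpoly2 r = {q. \<forall>i. (\<lambda>x. q x $ i) \<in> poly2 r}"

definition is_subspace_fun :: "(real^2 \<Rightarrow> real^2) set \<Rightarrow> bool" where
  "is_subspace_fun V \<longleftrightarrow> (\<lambda>x. 0) \<in> V \<and> (\<forall>p\<in>V. \<forall>q\<in>V. (\<lambda>x. p x + q x) \<in> V)
     \<and> (\<forall>s. \<forall>p\<in>V. (\<lambda>x. s *\<^sub>R p x) \<in> V)"

definition divergence :: "(real^2 \<Rightarrow> real^2) \<Rightarrow> real^2 \<Rightarrow> real" where
  "divergence q x = (\<Sum>i\<in>UNIV. (frechet_derivative q (at x)) (axis i 1) $ i)"

definition outward_normal :: "(real^2) set \<Rightarrow> (real^2) set \<Rightarrow> real^2" where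
  "outward_normal T e = (THE n. norm n = 1 \<and> (\<forall>x\<in>e. \<forall>y\<in>e. n \<bullet> (x - y) = 0)
       \<and> (\<forall>x\<in>T. \<forall>y\<in>e. n \<bullet> (x - y) \<le> 0))"

text \<open>Arc-length integral over a segment e (independent of orientation).\<close>
definition edge_integral :: "(real^2) set \<Rightarrow> (real^2 \<Rightarrow> real) \<Rightarrow> real" where
  "edge_integral e f = (let (A, B) = (SOME (A, B). A \<noteq> B \<and> e = closed_segment A B) in
      norm (B - A) * integral {0..1} (\<lambda>t. f ((1 - t) *\<^sub>R A + t *\<^sub>R B)))"

text \<open>Membership in S_h(j,l): v0 is piecewise P_j (on triangle interiors); vb is indexed by
  the edge, and is a polynomial of degree at most l on each edge of the mesh.\<close>
definition in_Sh :: "(real^2) set set \<Rightarrow> nat \<Rightarrow> nat \<Rightarrow> (real^2 \<Rightarrow> real)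
     \<Rightarrow> ((real^2) set \<Rightarrow> real^2 \<Rightarrow> real) \<Rightarrow> bool" where
  "in_Sh Th j l v0 vb \<longleftrightarrow>
     (\<forall>T\<in>Th. \<exists>p\<in>poly2 j. \<forall>x\<in>interior T. v0 x = p x) \<and>
     (\<forall>T\<in>Th. \<forall>e\<in>tri_edges T. \<exists>p\<in>poly2 l. \<forall>x\<in>e. vb e x = p x)"

text \<open>g is the discrete weak gradient of v = {v0, vb}: on each T it coincides (on the interior)
  with the element q0 of V(T) determined by the defining identity.\<close>
definition is_weak_grad :: "(real^2) set set \<Rightarrow> ((real^2) set \<Rightarrow> (real^2 \<Rightarrow> real^2) set)
     \<Rightarrow> (real^2 \<Rightarrow> real) \<Rightarrow> ((real^2) set \<Rightarrow> real^2 \<Rightarrow> real) \<Rightarrow> (real^2 \<Rightarrow> real^2) \<Rightarrow> bool" where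
  "is_weak_grad Th V v0 vb g \<longleftrightarrow>
     (\<forall>T\<in>Th. \<exists>q0\<in>V T. (\<forall>x\<in>interior T. g x = q0 x) \<and>
        (\<forall>q\<in>V T. integral T (\<lambda>x. q0 x \<bullet> q x)
             = - integral T (\<lambda>x. v0 x * divergence q x)
               + (\<Sum>e\<in>tri_edges T. edge_integral e (\<lambda>x. vb e x * (q x \<bullet> outward_normal T e)))))"

definition Linf :: "(real^2) set \<Rightarrow> (real^2 \<Rightarrow> real) \<Rightarrow> bool" where
  "Linf \<Omega> f \<longleftrightarrow> f \<in> borel_measurable (lebesgue_on \<Omega>) \<and> (\<exists>M. AE x in lebesgue_on \<Omega>. \<bar>f x\<bar> \<le> M)"

definition L2ip :: "(real^2) set \<Rightarrow> (real^2 \<Rightarrow> real) \<Rightarrow> (real^2 \<Rightarrow> real) \<Rightarrow> real" where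
  "L2ip \<Omega> u w = integral \<Omega> (\<lambda>x. u x * w x)"

definition L2normsq_vec :: "(real^2) set \<Rightarrow> (real^2 \<Rightarrow> real^2) \<Rightarrow> real" where
  "L2normsq_vec \<Omega> g = integral \<Omega> (\<lambda>x. g x \<bullet> g x)"

text \<open>a(v,v) = (a grad_d v, grad_d v) - (b v0, grad_d v) + (c v0, v0), with g = grad_d v.\<close>
definition bilin_diag :: "(real^2) set \<Rightarrow> (real^2 \<Rightarrow> real^2^2) \<Rightarrow> (real^2 \<Rightarrow> real^2) \<Rightarrow> (real^2 \<Rightarrow> real)
     \<Rightarrow> (real^2 \<Rightarrow> real) \<Rightarrow> (real^2 \<Rightarrow> real^2) \<Rightarrow> real" where
  "bilin_diag \<Omega> a b c v0 g =
     integral \<Omega> (\<lambda>x. (a x *v g x) \<bullet> g x)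
   - integral \<Omega> (\<lambda>x. (v0 x *\<^sub>R b x) \<bullet> g x)
   + integral \<Omega> (\<lambda>x. c x * v0 x * v0 x)"

end

theory Submission imports Defs begin

lemma Linf_mult:
  assumes "Linf S f" "Linf S g" shows "Linf S (\<lambda>x. f x * g x)"
proof -
  obtain A B where A: "AE x in lebesgue_on S. \<bar>f x\<bar> \<le> A" and B: "AE x in lebesgue_on S. \<bar>g x\<bar> \<le> B"
    using assms unfolding Linf_def by blast
  have "AE x in lebesgue_on S. \<bar>f x * g x\<bar> \<le> \<bar>A\<bar> * \<bar>B\<bar>"
    using A B
  proof eventually_elim
    case (elim x) then show ?case
      by (simp add: abs_mult mult_mono')
  qed
  then show ?thesis using assms unfolding Linf_def by (auto intro!: borel_measurable_times)
qed

lemma Linf_add: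
  assumes "Linf S f" "Linf S g" shows "Linf S (\<lambda>x. f x + g x)"
proof -
  obtain A B where A: "AE x in lebesgue_on S. \<bar>f x\<bar> \<le> A" and B: "AE x in lebesgue_on S. \<bar>g x\<bar> \<le> B"
    using assms unfolding Linf_def by blast
  have "AE x in lebesgue_on S. \<bar>f x + g x\<bar> \<le> A + B"
    using A B by eventually_elim auto
  then show ?thesis using assms unfolding Linf_def by (auto intro!: borel_measurable_add)
qed

lemma Linf_diff:
  assumes "Linf S f" "Linf S g" shows "Linf S (\<lambda>x. f x - g x)"
proof -
  obtain A B where A: "AE x in lebesgue_on S. \<bar>f x\<bar> \<le> A" and B: "AE x in lebesgue_on S. \<bar>g x\<bar> \<le> B"
    using assms unfolding Linf_def by blast
  have "AE x in lebesgue_on S. \<bar>f x - g x\<bar> \<le> A + B"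
    using A B by eventually_elim auto
  then show ?thesis using assms unfolding Linf_def by (auto intro!: borel_measurable_diff)
qed

lemma Linf_const: "Linf S (\<lambda>x. k)"
  unfolding Linf_def by auto

lemma Linf_integrable:
  assumes "S \<in> lmeasurable" "Linf S f" shows "integrable (lebesgue_on S) f"
proof -
  interpret finite_measure "lebesgue_on S" using finite_measure_lebesgue_on assms(1) .
  obtain A where "AE x in lebesgue_on S. \<bar>f x\<bar> \<le> A" "f \<in> borel_measurable (lebesgue_on S)"
    using assms unfolding Linf_def by blast
  then show ?thesis by (intro integrable_const_bound[where B=A]) auto
qed

lemma Linf_HK:
  assumes "S \<in> lmeasurable" "Linf S f" shows "integral S f = integral\<^sup>L (lebesgue_on S) f"
  using has_integral_integral_lebesgue_on[OF Linf_integrable[OF assms]] assms(1)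
  by (simp add: integral_unique fmeasurableD)

lemma poly2_cont: "p \<in> poly2 j \<Longrightarrow> continuous_on UNIV p"
proof -
  assume "p \<in> poly2 j"
  then obtain c where "\<forall>x. p x = (\<Sum>a\<le>j. \<Sum>b\<le>j - a. c a b * (x$1)^a * (x$2)^b)"
    unfolding poly2_def by blast
  then have "p = (\<lambda>x. (\<Sum>a\<le>j. \<Sum>b\<le>j - a. c a b * (x$1)^a * (x$2)^b))" by auto
  then show ?thesis by (auto intro!: continuous_intros)
qed


lemma tri_props: "triangle T \<Longrightarrow> compact T \<and> convex T"
  unfolding triangle_def by (auto intro: compact_convex_hull convex_convex_hull)

lemma interior_disjoint:
  assumes "triangulation \<Omega> Th" "T \<in> Th" "T' \<in> Th" "T \<noteq> T'"
  shows "interior T \<inter> interior T' = {}"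
proof -
  have I: "interior T \<inter> interior T' = interior (T \<inter> T')" by (simp add: interior_Int)
  from assms consider "T \<inter> T' = {}" | p where "T \<inter> T' = {p}" | "T \<inter> T' \<in> tri_edges T"
    unfolding triangulation_def by blast
  then show ?thesis
  proof cases
    case 1 then show ?thesis using I by simp
  next
    case 2 then show ?thesis using I by simp
  next
    case 3
    then obtain A B where "T \<inter> T' = closed_segment A B" unfolding tri_edges_def by blast
    then show ?thesis using I interior_closed_segment_ge2[of A B] by simp
  qed
qed

lemma piecewise_Linf:
  fixes f :: "real^2 \<Rightarrow> real"
  assumes tri: "triangulation \<Omega> Th" and op: "open \<Omega>"
    and pw: "\<forall>T\<in>Th. \<exists>P. continuous_on UNIV P \<and> (\<forall>x\<in>interior T. f x = P x)"
  shows "Linf \<Omega> f"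
proof -
  obtain P where P: "\<And>T. T\<in>Th \<Longrightarrow> continuous_on UNIV (P T) \<and> (\<forall>x\<in>interior T. f x = P T x)"
    using pw by metis
  have fin: "finite Th" and cov: "\<Union>Th = closure \<Omega>" and trs: "\<And>T. T\<in>Th \<Longrightarrow> triangle T"
    using tri unfolding triangulation_def by auto
  define N where "N = (\<Union>T\<in>Th. frontier T)"
  have negN: "negligible N"
    unfolding N_def using fin tri_props[OF trs]
    by (intro negligible_Union) (auto intro: negligible_convex_frontier)
  define h where "h x = (\<Sum>T\<in>Th. if x \<in> interior T then P T x else 0)" for x
  have hU: "h measurable_on UNIV"
    unfolding h_def
    by (intro measurable_on_sum fin measurable_on_restrict continuous_imp_measurable_on)
       (auto simp: P)
  have Oleb: "\<Omega> \<in> sets lebesgue" using op by auto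
  have hO: "h measurable_on \<Omega>"
    using measurable_on_restrict[OF hU Oleb] measurable_on_UNIV by blast
  have key: "\<exists>T\<in>Th. x \<in> interior T \<and> f x = P T x \<and> h x = P T x" if "x \<in> \<Omega> - N" for x
  proof -
    from that cov closure_subset obtain T where T: "T \<in> Th" "x \<in> T" by blast
    have "x \<notin> frontier T" using that T unfolding N_def by blast
    then have xi: "x \<in> interior T" using T frontier_def closure_subset by blast
    have "h x = (\<Sum>T'\<in>Th. if T' = T then P T x else 0)"
      unfolding h_def
    proof (rule sum.cong[OF refl])
      fix T' assume "T' \<in> Th"
      then show "(if x \<in> interior T' then P T' x else 0) = (if T' = T then P T x else 0)"
        using interior_disjoint[OF tri T(1), of T'] xi by auto
    qed
    also have "\<dots> = P T x" using T fin by simp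
    finally show ?thesis using xi T P by auto
  qed
  have fO: "f measurable_on \<Omega>"
    by (rule measurable_on_spike[OF hO negN]) (use key in metis)
  have meas: "f \<in> borel_measurable (lebesgue_on \<Omega>)"
    using fO measurable_on_iff_borel_measurable[OF Oleb] by blast
  have "\<exists>B. \<forall>x\<in>T. \<bar>P T x\<bar> \<le> B" if "T \<in> Th" for T
  proof -
    have "compact (P T ` T)"
      using that tri_props[OF trs[OF that]] P[OF that]
      by (intro compact_continuous_image) (auto intro: continuous_on_subset)
    then obtain B where "\<forall>y\<in>P T ` T. norm y \<le> B" using compact_imp_bounded bounded_iff by metis
    then show ?thesis by auto
  qed
  then obtain BB where BB: "\<And>T x. T \<in> Th \<Longrightarrow> x \<in> T \<Longrightarrow> \<bar>P T x\<bar> \<le> BB T" by metis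
  define B where "B = (\<Sum>T\<in>Th. \<bar>BB T\<bar>)"
  have bnd: "\<bar>f x\<bar> \<le> B" if xx: "x \<in> \<Omega> - N" for x
  proof -
    obtain T where T: "T\<in>Th" "x \<in> interior T" "f x = P T x" using key[OF xx] by blast
    have "\<bar>f x\<bar> \<le> \<bar>BB T\<bar>" using BB[OF T(1)] T interior_subset by force
    also have "\<dots> \<le> B" unfolding B_def using fin T(1) by (intro member_le_sum) auto
    finally show ?thesis .
  qed
  have "AE x in lebesgue. x \<notin> N"
    using negN negligible_iff_null_sets AE_not_in by blast
  then have "AE x in lebesgue. x \<in> \<Omega> \<longrightarrow> \<bar>f x\<bar> \<le> B"
    by eventually_elim (use bnd in auto)
  then have "AE x in lebesgue_on \<Omega>. \<bar>f x\<bar> \<le> B"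
    using Oleb by (subst AE_restrict_space_iff) auto
  then show ?thesis using meas unfolding Linf_def by blast
qed


lemma young1:
  fixes \<alpha> b B w g :: real
  assumes "\<alpha> > 0" "\<bar>b\<bar> \<le> B"
  shows "w * b * g \<le> \<alpha>/4 * (g*g) + B^2/\<alpha> * (w*w)"
proof -
  have "0 \<le> (\<alpha>*g/2 - b*w)^2" by simp
  then have "\<alpha> * (w*b*g) \<le> \<alpha>^2*(g*g)/4 + b^2*(w*w)" by (simp add: power2_eq_square algebra_simps)
  also have "b^2 \<le> B^2" using power_mono[OF assms(2), of 2] by simp
  then have "b^2*(w*w) \<le> B^2*(w*w)" by (simp add: mult_right_mono)
  finally have "\<alpha> * (w*b*g) \<le> \<alpha> * (\<alpha>/4 * (g*g) + B^2/\<alpha> * (w*w))"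
    using assms(1) by (simp add: algebra_simps power2_eq_square)
  then show ?thesis using assms(1) by simp
qed

lemma young2:
  fixes \<alpha> b1 b2 B c C Q w g1 g2 :: real
  assumes "\<alpha> > 0" "\<bar>b1\<bar> \<le> B" "\<bar>b2\<bar> \<le> B" "\<bar>c\<bar> \<le> C" "Q \<ge> \<alpha>*(g1*g1+g2*g2)"
  shows "Q - w*(b1*g1+b2*g2) + c*w*w + (2*B^2/\<alpha> + C + \<alpha>/2)*(w*w) \<ge> \<alpha>/2*((g1*g1+g2*g2)+w*w)"
proof -
  have 1: "w * b1 * g1 \<le> \<alpha>/4 * (g1*g1) + B^2/\<alpha> * (w*w)" using young1 assms by blast
  have 2: "w * b2 * g2 \<le> \<alpha>/4 * (g2*g2) + B^2/\<alpha> * (w*w)" using young1 assms by blast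
  have 3: "c*w*w \<ge> - C*(w*w)"
  proof -
    have e: "\<bar>c*w*w\<bar> = \<bar>c\<bar>*(w*w)" by (simp add: abs_mult)
    have "\<bar>c\<bar>*(w*w) \<le> C*(w*w)" using assms(4) by (simp add: mult_right_mono)
    then have "\<bar>c*w*w\<bar> \<le> C*(w*w)" using e by simp
    then show ?thesis by linarith
  qed
  have 4: "g1*g1 \<ge> 0" "g2*g2\<ge>0" "w*w \<ge> 0" by auto
  have 5: "\<alpha>*(g1*g1) \<ge> 0" "\<alpha>*(g2*g2) \<ge> 0" "\<alpha>*(w*w) \<ge> 0" using assms(1) by auto
  have e1: "w*(b1*g1+b2*g2) = w*b1*g1 + w*b2*g2" by (simp add: algebra_simps)
  have e2: "(2*B^2/\<alpha> + C + \<alpha>/2)*(w*w) = 2*(B^2/\<alpha>*(w*w)) + C*(w*w) + \<alpha>/2*(w*w)"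
    by (simp add: algebra_simps)
  have e3: "\<alpha>/2*((g1*g1+g2*g2)+w*w) = \<alpha>*(g1*g1)/2 + \<alpha>*(g2*g2)/2 + \<alpha>/2*(w*w)"
    by (simp add: algebra_simps)
  have e4: "\<alpha>*(g1*g1+g2*g2) = \<alpha>*(g1*g1) + \<alpha>*(g2*g2)" by (simp add: algebra_simps)
  show ?thesis unfolding e1 e2 e3 using 1 2 3 5 assms(5) e4 by linarith
qed


theorem lemma7p1:
  fixes \<Omega> :: "(real^2) set" and Th :: "(real^2) set set" and j l r :: nat
    and V :: "(real^2) set \<Rightarrow> (real^2 \<Rightarrow> real^2) set"
    and a :: "real^2 \<Rightarrow> real^2^2" and b :: "real^2 \<Rightarrow> real^2" and c :: "real^2 \<Rightarrow> real"
    and \<alpha> :: real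
  assumes "polygonal_domain \<Omega>"
    and "triangulation \<Omega> Th"
    and "\<forall>T\<in>Th. is_subspace_fun (V T) \<and> V T \<subseteq> vpoly2 r"
    and "\<forall>i k. Linf \<Omega> (\<lambda>x. a x $ i $ k)"
    and "AE x in lebesgue_on \<Omega>. transpose (a x) = a x"
    and "\<alpha> > 0"
    and "AE x in lebesgue_on \<Omega>. \<forall>\<xi>. \<xi> \<bullet> (a x *v \<xi>) \<ge> \<alpha> * (\<xi> \<bullet> \<xi>)"
    and "\<forall>i. Linf \<Omega> (\<lambda>x. b x $ i)"
    and "Linf \<Omega> c"
  shows "\<exists>K \<alpha>1. \<alpha>1 > 0 \<and>
    (\<forall>v0 vb g. in_Sh Th j l v0 vb \<and> is_weak_grad Th V v0 vb g \<longrightarrow>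
       bilin_diag \<Omega> a b c v0 g + K * L2ip \<Omega> v0 v0
         \<ge> \<alpha>1 * (L2normsq_vec \<Omega> g + L2ip \<Omega> v0 v0))"
proof -
  have op: "open \<Omega>" and bd: "bounded \<Omega>" using assms(1) unfolding polygonal_domain_def by auto
  have lm: "\<Omega> \<in> lmeasurable" using lmeasurable_open[OF bd op] .
  have tri: "triangulation \<Omega> Th" by fact
  have al: "\<alpha> > 0" by fact
  have La: "\<And>i k. Linf \<Omega> (\<lambda>x. a x $ i $ k)" and Lb: "\<And>i. Linf \<Omega> (\<lambda>x. b x $ i)" and Lc: "Linf \<Omega> c"
    using assms by auto
  obtain M1 where M1: "AE x in lebesgue_on \<Omega>. \<bar>b x $ 1\<bar> \<le> M1" using Lb[of 1] unfolding Linf_def by blast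
  obtain M2 where M2: "AE x in lebesgue_on \<Omega>. \<bar>b x $ 2\<bar> \<le> M2" using Lb[of 2] unfolding Linf_def by blast
  obtain Mc where Mc: "AE x in lebesgue_on \<Omega>. \<bar>c x\<bar> \<le> Mc" using Lc unfolding Linf_def by blast
  define Bb where "Bb = \<bar>M1\<bar> + \<bar>M2\<bar>"
  define K where "K = 2*Bb^2/\<alpha> + \<bar>Mc\<bar> + \<alpha>/2"
  have main: "bilin_diag \<Omega> a b c v0 g + K * L2ip \<Omega> v0 v0
         \<ge> \<alpha>/2 * (L2normsq_vec \<Omega> g + L2ip \<Omega> v0 v0)"
    if H: "in_Sh Th j l v0 vb" "is_weak_grad Th V v0 vb g" for v0 vb g
  proof -
    have Lv: "Linf \<Omega> v0"
    proof (rule piecewise_Linf[OF tri op], intro ballI)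
      fix T assume "T \<in> Th"
      then obtain p where "p \<in> poly2 j" "\<forall>x\<in>interior T. v0 x = p x"
        using H(1) unfolding in_Sh_def by blast
      then show "\<exists>P. continuous_on UNIV P \<and> (\<forall>x\<in>interior T. v0 x = P x)"
        using poly2_cont by blast
    qed
    have Lg: "Linf \<Omega> (\<lambda>x. g x $ i)" for i
    proof (rule piecewise_Linf[OF tri op], intro ballI)
      fix T assume T: "T \<in> Th"
      then obtain q0 where "q0 \<in> V T" "\<forall>x\<in>interior T. g x = q0 x"
        using H(2) unfolding is_weak_grad_def by blast
      moreover have "q0 \<in> vpoly2 r" using assms(3) T \<open>q0 \<in> V T\<close> by blast
      ultimately show "\<exists>P. continuous_on UNIV P \<and> (\<forall>x\<in>interior T. g x $ i = P x)"
        unfolding vpoly2_def using poly2_cont by fastforce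
    qed
    define g1 where "g1 x = g x $ 1" for x
    define g2 where "g2 x = g x $ 2" for x
    have Lg1: "Linf \<Omega> g1" and Lg2: "Linf \<Omega> g2" unfolding g1_def g2_def using Lg by auto
    define fA where "fA x = (a x $1$1 * g1 x + a x $1$2 * g2 x) * g1 x
                 + (a x $2$1 * g1 x + a x $2$2 * g2 x) * g2 x" for x
    define fB where "fB x = v0 x * (b x $ 1 * g1 x + b x $ 2 * g2 x)" for x
    define fC where "fC x = c x * v0 x * v0 x" for x
    define fV where "fV x = v0 x * v0 x" for x
    define fG where "fG x = g1 x * g1 x + g2 x * g2 x" for x
    have eA: "(\<lambda>x. (a x *v g x) \<bullet> g x) = fA"
      by (auto simp: fA_def g1_def g2_def inner_vec_def matrix_vector_mult_def sum_2)
    have eB: "(\<lambda>x. (v0 x *\<^sub>R b x) \<bullet> g x) = fB"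
      by (auto simp: fB_def g1_def g2_def inner_vec_def sum_2 algebra_simps)
    have eG: "(\<lambda>x. g x \<bullet> g x) = fG"
      by (auto simp: fG_def g1_def g2_def inner_vec_def sum_2)
    have eC: "(\<lambda>x. c x * v0 x * v0 x) = fC" by (auto simp: fC_def)
    have eV: "(\<lambda>x. v0 x * v0 x) = fV" by (auto simp: fV_def)
    have LA: "Linf \<Omega> fA" unfolding fA_def
      by (intro Linf_add Linf_mult La Lg1 Lg2)
    have LB: "Linf \<Omega> fB" unfolding fB_def
      by (intro Linf_add Linf_mult Lb Lg1 Lg2 Lv)
    have LC: "Linf \<Omega> fC" unfolding fC_def
      by (intro Linf_mult Lc Lv)
    have LV: "Linf \<Omega> fV" unfolding fV_def
      by (intro Linf_mult Lv)
    have LG: "Linf \<Omega> fG" unfolding fG_def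
      by (intro Linf_add Linf_mult Lg1 Lg2)
    note I = Linf_integrable[OF lm]
    let ?L = "\<lambda>f. integral\<^sup>L (lebesgue_on \<Omega>) f"
    have lhs: "bilin_diag \<Omega> a b c v0 g + K * L2ip \<Omega> v0 v0
       = ?L (\<lambda>x. fA x - fB x + fC x + K * fV x)"
    proof -
      have "bilin_diag \<Omega> a b c v0 g + K * L2ip \<Omega> v0 v0 = ?L fA - ?L fB + ?L fC + K * ?L fV"
        unfolding bilin_diag_def L2ip_def eA eB eC eV
        using Linf_HK[OF lm LA] Linf_HK[OF lm LB] Linf_HK[OF lm LC] Linf_HK[OF lm LV]
        by simp
      also have "\<dots> = ?L (\<lambda>x. fA x - fB x + fC x + K * fV x)"
        using I[OF LA] I[OF LB] I[OF LC] I[OF LV] by simp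
      finally show ?thesis .
    qed
    have rhs: "\<alpha>/2 * (L2normsq_vec \<Omega> g + L2ip \<Omega> v0 v0) = ?L (\<lambda>x. \<alpha>/2 * (fG x + fV x))"
    proof -
      have "\<alpha>/2 * (L2normsq_vec \<Omega> g + L2ip \<Omega> v0 v0) = \<alpha>/2 * (?L fG + ?L fV)"
        unfolding L2normsq_vec_def L2ip_def eG eV
        using Linf_HK[OF lm LG] Linf_HK[OF lm LV]
        by simp
      also have "\<dots> = ?L (\<lambda>x. \<alpha>/2 * (fG x + fV x))"
        using I[OF LG] I[OF LV] by simp
      finally show ?thesis .
    qed
    have ae: "AE x in lebesgue_on \<Omega>. \<alpha>/2 * (fG x + fV x) \<le> fA x - fB x + fC x + K * fV x"
      using M1 M2 Mc assms(7)
    proof eventually_elim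
      case (elim x)
      have "g x \<bullet> (a x *v g x) \<ge> \<alpha> * (g x \<bullet> g x)" using elim(4) by blast
      then have Q: "fA x \<ge> \<alpha> * (g1 x * g1 x + g2 x * g2 x)"
        using fun_cong[OF eA, of x] fun_cong[OF eG, of x] unfolding fG_def
        by (simp add: inner_commute)
      have b1: "\<bar>b x $ 1\<bar> \<le> Bb" and b2: "\<bar>b x $ 2\<bar> \<le> Bb" using elim(1,2) unfolding Bb_def by auto
      have cc: "\<bar>c x\<bar> \<le> \<bar>Mc\<bar>" using elim(3) by auto
      show ?case
        using young2[OF al b1 b2 cc Q, of "v0 x"]
        unfolding fG_def fV_def fB_def fC_def K_def by (simp add: mult.assoc)
    qed
    have "?L (\<lambda>x. \<alpha>/2 * (fG x + fV x)) \<le> ?L (\<lambda>x. fA x - fB x + fC x + K * fV x)"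
      by (rule integral_mono_AE[OF _ _ ae])
         (use I[OF LA] I[OF LB] I[OF LC] I[OF LV] I[OF LG] in auto)
    then show ?thesis unfolding lhs rhs by simp
  qed
  show ?thesis
    by (rule exI[of _ K], rule exI[of _ "\<alpha>/2"]) (use al main in auto)
qed

end
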